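(* Let $C(\cdot,t)$, $t\in(-\infty,+\infty)$, be a solution by closed convex smooth embedded curves of the flow $$\frac{\partial C(p,t)}{\partial t}=\Big(\lambda+\int_0^{\xi(p)}\varphi\,d\xi\Big)C+\frac{\varphi}{2}C_\xi$$ ($\lambda$ a real constant) whose centro-affine curvature $\varphi$ is uniformly bounded on $S^1\times(-\infty,+\infty)$. Then $E(t)=\oint_{C(\cdot,t)}\varphi^2\,d\xi$ satisfies $\lim_{t\to-\infty}E(t)=0$.
   Context: For $u,v\in\mathbb{R}^2$, $[u,v]$ denotes the determinant of the matrix with columns $u,v$. Each curve $C(\cdot,t):S^1\to\mathbb{R}^2$ is smooth, closed, with $[C,C_p]\neq0$, $[C_p,C_{pp}]\neq0$ (then $[C_p,C_{pp}]/[C,C_p]>0$). The centro-affine metric is $g=\sqrt{[C_p,C_{pp}]/[C,C_p]}$, centro-affine arc-length $\xi(p)=\int_{p_0}^p g\,dp$ (so $d\xi=g\,dp$), and centro-affine curvature $\varphi=[C_{\xi\xi},C]/[C_\xi,C]$. *)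

theory Defs
  imports "HOL-Analysis.Analysis"
begin

definition det2 :: "real \<times> real \<Rightarrow> real \<times> real \<Rightarrow> real" where
  "det2 u v = fst u * snd v - snd u * fst v"

fun Ck :: "nat \<Rightarrow> (real \<times> real \<Rightarrow> real \<times> real) \<Rightarrow> bool" where
  "Ck 0 f = continuous_on UNIV f"
| "Ck (Suc k) f = (\<exists>f1 f2. (\<forall>z. (f has_derivative (\<lambda>h. fst h *\<^sub>R f1 z + snd h *\<^sub>R f2 z)) (at z))
                         \<and> Ck k f1 \<and> Ck k f2)"

definition smooth_map :: "(real \<times> real \<Rightarrow> real \<times> real) \<Rightarrow> bool" where
  "smooth_map f = (\<forall>k. Ck k f)"

text \<open>A family of curves: C p t, p the (1-periodic) curve parameter, t time.\<close>
definition dP :: "(real \<Rightarrow> real \<Rightarrow> real \<times> real) \<Rightarrow> real \<Rightarrow> real \<Rightarrow> real \<times> real" where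
  "dP C p t = vector_derivative (\<lambda>q. C q t) (at p)"

definition dT :: "(real \<Rightarrow> real \<Rightarrow> real \<times> real) \<Rightarrow> real \<Rightarrow> real \<Rightarrow> real \<times> real" where
  "dT C p t = vector_derivative (\<lambda>s. C p s) (at t)"

definition ca_metric :: "(real \<Rightarrow> real \<Rightarrow> real \<times> real) \<Rightarrow> real \<Rightarrow> real \<Rightarrow> real" where
  "ca_metric C p t = sqrt (det2 (dP C p t) (dP (dP C) p t) / det2 (C p t) (dP C p t))"

definition Cxi :: "(real \<Rightarrow> real \<Rightarrow> real \<times> real) \<Rightarrow> real \<Rightarrow> real \<Rightarrow> real \<times> real" where
  "Cxi C p t = (1 / ca_metric C p t) *\<^sub>R dP C p t"

definition Cxixi :: "(real \<Rightarrow> real \<Rightarrow> real \<times> real) \<Rightarrow> real \<Rightarrow> real \<Rightarrow> real \<times> real" where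
  "Cxixi C p t = (1 / ca_metric C p t) *\<^sub>R dP (Cxi C) p t"

definition ca_curv :: "(real \<Rightarrow> real \<Rightarrow> real \<times> real) \<Rightarrow> real \<Rightarrow> real \<Rightarrow> real" where
  "ca_curv C p t = det2 (Cxixi C p t) (C p t) / det2 (Cxi C p t) (C p t)"

text \<open>E(t) = closed integral of phi^2 d xi = integral over one period of phi^2 g dp\<close>
definition energy :: "(real \<Rightarrow> real \<Rightarrow> real \<times> real) \<Rightarrow> real \<Rightarrow> real" where
  "energy C t = integral {0..1} (\<lambda>p. (ca_curv C p t)\<^sup>2 * ca_metric C p t)"

end

theory Submission
  imports Defs
begin

fun CkR :: "nat \<Rightarrow> (real \<times> real \<Rightarrow> real) \<Rightarrow> bool" where
  "CkR 0 f = continuous_on UNIV f"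
| "CkR (Suc k) f = (\<exists>f1 f2. (\<forall>z. (f has_derivative (\<lambda>h. fst h * f1 z + snd h * f2 z)) (at z))
                         \<and> CkR k f1 \<and> CkR k f2)"

definition smR :: "(real \<times> real \<Rightarrow> real) \<Rightarrow> bool" where
  "smR f = (\<forall>k. CkR k f)"

lemma CkR_SucI:
  fixes f fa fb :: "real \<times> real \<Rightarrow> real"
  assumes "\<And>z. (f has_derivative (\<lambda>h. fst h * fa z + snd h * fb z)) (at z)" "CkR k fa" "CkR k fb"
  shows "CkR (Suc k) f"
  using assms by (subst CkR.simps(2)) blast

lemma CkR_SucE:
  assumes "CkR (Suc k) f"
  obtains f1 f2 where "\<And>z. (f has_derivative (\<lambda>h. fst h * f1 z + snd h * f2 z)) (at z)" "CkR k f1" "CkR k f2"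
proof -
  from assms obtain f1 f2 where "\<forall>z. (f has_derivative (\<lambda>h. fst h * f1 z + snd h * f2 z)) (at z)" "CkR k f1" "CkR k f2"
    by auto
  then show thesis using that by blast
qed

lemma CkR_Suc_imp: "CkR (Suc k) f \<Longrightarrow> CkR k f"
proof (induction k arbitrary: f)
  case 0
  then obtain f1 f2 where d: "\<And>z. (f has_derivative (\<lambda>h. fst h * f1 z + snd h * f2 z)) (at z)"
    by (metis CkR_SucE)
  have "\<And>z. isCont f z" using d has_derivative_continuous by blast
  then show ?case by (simp add: continuous_at_imp_continuous_on)
next
  case (Suc k)
  then obtain f1 f2 where d: "\<And>z. (f has_derivative (\<lambda>h. fst h * f1 z + snd h * f2 z)) (at z)"
    and h1: "CkR (Suc k) f1" and h2: "CkR (Suc k) f2" by (metis CkR_SucE)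
  show ?case by (rule CkR_SucI[OF d Suc.IH[OF h1] Suc.IH[OF h2]])
qed

lemma CkR_const: "CkR k (\<lambda>z. c)"
proof (induction k arbitrary: c)
  case 0 then show ?case by simp
next
  case (Suc k)
  show ?case by (rule CkR_SucI[where fa="\<lambda>z. 0" and fb="\<lambda>z. 0"]) (simp_all add: Suc.IH)
qed

lemma CkR_add: "CkR k f \<Longrightarrow> CkR k g \<Longrightarrow> CkR k (\<lambda>z. f z + g z)"
proof (induction k arbitrary: f g)
  case 0 then show ?case by (simp add: continuous_on_add)
next
  case (Suc k)
  from Suc.prems(1) obtain f1 f2 where f: "\<And>z. (f has_derivative (\<lambda>h. fst h * f1 z + snd h * f2 z)) (at z)"
    "CkR k f1" "CkR k f2" by (metis CkR_SucE)
  from Suc.prems(2) obtain g1 g2 where g: "\<And>z. (g has_derivative (\<lambda>h. fst h * g1 z + snd h * g2 z)) (at z)"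
    "CkR k g1" "CkR k g2" by (metis CkR_SucE)
  show ?case
  proof (rule CkR_SucI[where fa="\<lambda>z. f1 z + g1 z" and fb="\<lambda>z. f2 z + g2 z"])
    fix z
    show "((\<lambda>z. f z + g z) has_derivative (\<lambda>h. fst h * (\<lambda>z. f1 z + g1 z) z + snd h * (\<lambda>z. f2 z + g2 z) z)) (at z)"
      by (rule has_derivative_eq_rhs[OF has_derivative_add[OF f(1) g(1)]])
         (simp add: fun_eq_iff algebra_simps)
  qed (rule Suc.IH[OF f(2) g(2)], rule Suc.IH[OF f(3) g(3)])
qed

lemma CkR_mult: "CkR k f \<Longrightarrow> CkR k g \<Longrightarrow> CkR k (\<lambda>z. f z * g z)"
proof (induction k arbitrary: f g)
  case 0 then show ?case by (simp add: continuous_on_mult)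
next
  case (Suc k)
  from Suc.prems(1) obtain f1 f2 where f: "\<And>z. (f has_derivative (\<lambda>h. fst h * f1 z + snd h * f2 z)) (at z)"
    "CkR k f1" "CkR k f2" by (metis CkR_SucE)
  from Suc.prems(2) obtain g1 g2 where g: "\<And>z. (g has_derivative (\<lambda>h. fst h * g1 z + snd h * g2 z)) (at z)"
    "CkR k g1" "CkR k g2" by (metis CkR_SucE)
  have fk: "CkR k f" "CkR k g" using Suc.prems CkR_Suc_imp by blast+
  show ?case
  proof (rule CkR_SucI[where fa="\<lambda>z. f1 z * g z + f z * g1 z" and fb="\<lambda>z. f2 z * g z + f z * g2 z"])
    fix z
    show "((\<lambda>z. f z * g z) has_derivative (\<lambda>h. fst h * (\<lambda>z. f1 z * g z + f z * g1 z) z + snd h * (\<lambda>z. f2 z * g z + f z * g2 z) z)) (at z)"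
      by (rule has_derivative_eq_rhs[OF has_derivative_mult[OF f(1) g(1)]])
         (simp add: fun_eq_iff algebra_simps)
  qed (rule CkR_add[OF Suc.IH[OF f(2) fk(2)] Suc.IH[OF fk(1) g(2)]], rule CkR_add[OF Suc.IH[OF f(3) fk(2)] Suc.IH[OF fk(1) g(3)]])
qed

lemma CkR_inverse: "CkR k f \<Longrightarrow> (\<And>z. f z \<noteq> 0) \<Longrightarrow> CkR k (\<lambda>z. inverse (f z))"
proof (induction k arbitrary: f)
  case 0 then show ?case by (simp add: continuous_on_inverse)
next
  case (Suc k)
  from Suc.prems(1) obtain f1 f2 where f: "\<And>z. (f has_derivative (\<lambda>h. fst h * f1 z + snd h * f2 z)) (at z)"
    "CkR k f1" "CkR k f2" by (metis CkR_SucE)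
  have fk: "CkR k f" using Suc.prems CkR_Suc_imp by blast
  have ik: "CkR k (\<lambda>z. inverse (f z))" using Suc.IH fk Suc.prems by blast
  have m: "CkR k (\<lambda>z. - (h z * (inverse (f z) * inverse (f z))))" if "CkR k h" for h
    using CkR_mult[OF CkR_const[of k "-1"] CkR_mult[OF that CkR_mult[OF ik ik]]] by simp
  show ?case
  proof (rule CkR_SucI[where fa="\<lambda>z. - (f1 z * (inverse (f z) * inverse (f z)))" and fb="\<lambda>z. - (f2 z * (inverse (f z) * inverse (f z)))"])
    fix z
    show "((\<lambda>z. inverse (f z)) has_derivative (\<lambda>h. fst h * (\<lambda>z. - (f1 z * (inverse (f z) * inverse (f z)))) z + snd h * (\<lambda>z. - (f2 z * (inverse (f z) * inverse (f z)))) z)) (at z)"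
      by (rule has_derivative_eq_rhs[OF Deriv.has_derivative_inverse[OF Suc.prems(2) f(1)]])
         (simp add: fun_eq_iff algebra_simps)
  qed (rule m[OF f(2)], rule m[OF f(3)])
qed

lemma CkR_sqrt: "CkR k f \<Longrightarrow> (\<And>z. f z > 0) \<Longrightarrow> CkR k (\<lambda>z. sqrt (f z))"
proof (induction k arbitrary: f)
  case 0 then show ?case by (simp add: continuous_on_real_sqrt)
next
  case (Suc k)
  from Suc.prems(1) obtain f1 f2 where f: "\<And>z. (f has_derivative (\<lambda>h. fst h * f1 z + snd h * f2 z)) (at z)"
    "CkR k f1" "CkR k f2" by (metis CkR_SucE)
  have fk: "CkR k f" using Suc.prems CkR_Suc_imp by blast
  have sk: "CkR k (\<lambda>z. sqrt (f z))" using Suc.IH fk Suc.prems by blast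
  have nz: "\<And>z. sqrt (f z) \<noteq> 0" using Suc.prems(2) by (metis less_irrefl real_sqrt_eq_zero_cancel_iff)
  have ik: "CkR k (\<lambda>z. inverse (sqrt (f z)))" using CkR_inverse[OF sk nz] .
  have m: "CkR k (\<lambda>z. h z * (inverse (sqrt (f z)) * (1/2)))" if "CkR k h" for h
    using CkR_mult[OF that CkR_mult[OF ik CkR_const[of k "1/2"]]] .
  show ?case
  proof (rule CkR_SucI[where fa="\<lambda>z. f1 z * (inverse (sqrt (f z)) * (1/2))" and fb="\<lambda>z. f2 z * (inverse (sqrt (f z)) * (1/2))"])
    fix z
    show "((\<lambda>z. sqrt (f z)) has_derivative (\<lambda>h. fst h * (\<lambda>z. f1 z * (inverse (sqrt (f z)) * (1/2))) z + snd h * (\<lambda>z. f2 z * (inverse (sqrt (f z)) * (1/2))) z)) (at z)"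
      by (rule has_derivative_eq_rhs[OF DERIV_compose_FDERIV[OF DERIV_real_sqrt[OF Suc.prems(2)] f(1)]])
         (simp add: fun_eq_iff algebra_simps)
  qed (rule m[OF f(2)], rule m[OF f(3)])
qed


lemma smR_D:
  assumes "smR f"
  obtains fa fb where "\<And>z. (f has_derivative (\<lambda>h. fst h * fa z + snd h * fb z)) (at z)" "smR fa" "smR fb"
proof -
  from assms have "CkR (Suc 0) f" by (simp add: smR_def)
  then obtain fa fb where d: "\<And>z. (f has_derivative (\<lambda>h. fst h * fa z + snd h * fb z)) (at z)"
    by (metis CkR_SucE)
  have "CkR k fa \<and> CkR k fb" for k
  proof -
    from assms have "CkR (Suc k) f" by (simp add: smR_def)
    then obtain ga gb where d2: "\<And>z. (f has_derivative (\<lambda>h. fst h * ga z + snd h * gb z)) (at z)"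
      and "CkR k ga" "CkR k gb" by (metis CkR_SucE)
    moreover have "ga = fa \<and> gb = fb"
    proof -
      have "(\<lambda>h. fst h * ga z + snd h * gb z) = (\<lambda>h. fst h * fa z + snd h * fb z)" for z
        using has_derivative_unique[OF d2 d] .
      from fun_cong[OF this, of "(1,0)"] fun_cong[OF this, of "(0,1)"]
      have "ga z = fa z" "gb z = fb z" for z by auto
      then show ?thesis by auto
    qed
    ultimately show ?thesis by auto
  qed
  then have "smR fa" "smR fb" by (auto simp: smR_def)
  with d show thesis using that by blast
qed

lemma smR_I:
  assumes "\<And>z. (f has_derivative (\<lambda>h. fst h * fa z + snd h * fb z)) (at z)" "smR fa" "smR fb"
  shows "smR f"
  unfolding smR_def
proof
  fix k show "CkR k f"
  proof (cases k)
    case 0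
    have "CkR (Suc 0) f" using assms by (intro CkR_SucI[OF assms(1)]) (auto simp: smR_def)
    then show ?thesis using 0 CkR_Suc_imp by blast
  next
    case (Suc j)
    show ?thesis unfolding Suc by (rule CkR_SucI[OF assms(1)]) (use assms(2,3) in \<open>auto simp: smR_def\<close>)
  qed
qed

lemma smR_const[simp]: "smR (\<lambda>z. c)" by (simp add: smR_def CkR_const)
lemma smR_add: "smR f \<Longrightarrow> smR g \<Longrightarrow> smR (\<lambda>z. f z + g z)" by (simp add: smR_def CkR_add)
lemma smR_mult: "smR f \<Longrightarrow> smR g \<Longrightarrow> smR (\<lambda>z. f z * g z)" by (simp add: smR_def CkR_mult)
lemma smR_inverse: "smR f \<Longrightarrow> (\<And>z. f z \<noteq> 0) \<Longrightarrow> smR (\<lambda>z. inverse (f z))" by (simp add: smR_def CkR_inverse)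
lemma smR_sqrt: "smR f \<Longrightarrow> (\<And>z. f z > 0) \<Longrightarrow> smR (\<lambda>z. sqrt (f z))" by (simp add: smR_def CkR_sqrt)
lemma smR_minus: "smR f \<Longrightarrow> smR (\<lambda>z. - f z)"
  using smR_mult[OF smR_const[of "-1"]] by simp
lemma smR_diff: "smR f \<Longrightarrow> smR g \<Longrightarrow> smR (\<lambda>z. f z - g z)"
  using smR_add[OF _ smR_minus] by simp
lemma smR_divide: "smR f \<Longrightarrow> smR g \<Longrightarrow> (\<And>z. g z \<noteq> 0) \<Longrightarrow> smR (\<lambda>z. f z / g z)"
  using smR_mult[OF _ smR_inverse] by (simp add: divide_inverse)
lemma smR_power: "smR f \<Longrightarrow> smR (\<lambda>z. f z ^ n)"
  by (induction n) (auto intro: smR_mult)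

lemma smR_cont: "smR f \<Longrightarrow> continuous_on UNIV f"
  by (metis CkR.simps(1) smR_def)

lemma smR_isCont: "smR f \<Longrightarrow> isCont f z"
  using smR_cont continuous_on_eq_continuous_at by blast

definition Dv :: "real \<times> real \<Rightarrow> (real \<times> real \<Rightarrow> real) \<Rightarrow> real \<times> real \<Rightarrow> real" where
  "Dv e f z = deriv (\<lambda>s. f (z + s *\<^sub>R e)) 0"

lemma smR_Dv_formula:
  assumes "\<And>z. (f has_derivative (\<lambda>h. fst h * fa z + snd h * fb z)) (at z)"
  shows "((\<lambda>s. f (z + s *\<^sub>R e)) has_real_derivative (fst e * fa (z + s0 *\<^sub>R e) + snd e * fb (z + s0 *\<^sub>R e))) (at s0)"
proof -
  have l: "((\<lambda>s. z + s *\<^sub>R e) has_derivative (\<lambda>h. h *\<^sub>R e)) (at s0)"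
    by (auto intro!: derivative_eq_intros)
  have "((\<lambda>s. f (z + s *\<^sub>R e)) has_derivative
      (\<lambda>h. fst (h *\<^sub>R e) * fa (z + s0 *\<^sub>R e) + snd (h *\<^sub>R e) * fb (z + s0 *\<^sub>R e))) (at s0)"
    using has_derivative_compose[OF l assms] by simp
  then show ?thesis
    unfolding has_field_derivative_def by (rule has_derivative_eq_rhs) (auto simp: fun_eq_iff algebra_simps)
qed

lemma Dv_eq:
  assumes "\<And>z. (f has_derivative (\<lambda>h. fst h * fa z + snd h * fb z)) (at z)"
  shows "Dv e f z = fst e * fa z + snd e * fb z"
  unfolding Dv_def using DERIV_imp_deriv[OF smR_Dv_formula[OF assms, of z e 0]] by simp

lemma smR_Dv: assumes "smR f" shows "smR (Dv e f)"
proof -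
  obtain fa fb where d: "\<And>z. (f has_derivative (\<lambda>h. fst h * fa z + snd h * fb z)) (at z)" "smR fa" "smR fb"
    using smR_D[OF assms] by blast
  have "Dv e f = (\<lambda>z. fst e * fa z + snd e * fb z)" by (rule ext) (rule Dv_eq[OF d(1)])
  then show ?thesis using d by (simp add: smR_add smR_mult)
qed

lemma smR_line_deriv:
  assumes "smR f"
  shows "((\<lambda>s. f (z + s *\<^sub>R e)) has_real_derivative Dv e f (z + s0 *\<^sub>R e)) (at s0)"
proof -
  obtain fa fb where d: "\<And>z. (f has_derivative (\<lambda>h. fst h * fa z + snd h * fb z)) (at z)"
    using smR_D[OF assms] by blast
  show ?thesis using smR_Dv_formula[OF d] Dv_eq[OF d] by simp
qed

lemma smR_frechet:
  assumes "smR f"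
  shows "(f has_derivative (\<lambda>h. fst h * Dv (1,0) f z + snd h * Dv (0,1) f z)) (at z)"
proof -
  obtain fa fb where d: "\<And>z. (f has_derivative (\<lambda>h. fst h * fa z + snd h * fb z)) (at z)"
    using smR_D[OF assms] by blast
  show ?thesis using d Dv_eq[OF d] by simp
qed

abbreviation Dp where "Dp \<equiv> Dv (1,0)"
abbreviation Dt where "Dt \<equiv> Dv (0,1)"

lemma smR_Dp_deriv:
  assumes "smR f"
  shows "((\<lambda>q. f (q, t)) has_real_derivative Dp f (q0, t)) (at q0 within S)"
proof -
  have "((\<lambda>s. f ((0,t) + s *\<^sub>R (1,0))) has_real_derivative Dp f ((0,t) + q0 *\<^sub>R (1,0))) (at q0)"
    by (rule smR_line_deriv[OF assms])
  then show ?thesis by (simp add: has_field_derivative_at_within)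
qed

lemma smR_Dt_deriv:
  assumes "smR f"
  shows "((\<lambda>s. f (p, s)) has_real_derivative Dt f (p, s0)) (at s0 within S)"
proof -
  have "((\<lambda>s. f ((p,0) + s *\<^sub>R (0,1))) has_real_derivative Dt f ((p,0) + s0 *\<^sub>R (0,1))) (at s0)"
    by (rule smR_line_deriv[OF assms])
  then show ?thesis by (simp add: has_field_derivative_at_within)
qed

lemma Dv_from_deriv:
  assumes "((\<lambda>s. f (z + s *\<^sub>R e)) has_real_derivative D) (at 0)"
  shows "Dv e f z = D"
  unfolding Dv_def using DERIV_imp_deriv[OF assms] .

lemma line0: "smR f \<Longrightarrow> ((\<lambda>s. f (z + s *\<^sub>R e)) has_real_derivative Dv e f z) (at 0)"
  using smR_line_deriv[of f z e 0] by simp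

lemma Dv_const[simp]: "Dv e (\<lambda>z. c) = (\<lambda>z. 0)"
  by (rule ext, rule Dv_from_deriv) (auto intro!: derivative_eq_intros)

lemma Dv_add: "smR f \<Longrightarrow> smR g \<Longrightarrow> Dv e (\<lambda>z. f z + g z) = (\<lambda>z. Dv e f z + Dv e g z)"
  by (rule ext, rule Dv_from_deriv) (auto intro!: derivative_eq_intros line0)

lemma Dv_diff: "smR f \<Longrightarrow> smR g \<Longrightarrow> Dv e (\<lambda>z. f z - g z) = (\<lambda>z. Dv e f z - Dv e g z)"
  by (rule ext, rule Dv_from_deriv) (auto intro!: derivative_eq_intros line0)

lemma Dv_minus: "smR f \<Longrightarrow> Dv e (\<lambda>z. - f z) = (\<lambda>z. - Dv e f z)"
  by (rule ext, rule Dv_from_deriv) (auto intro!: derivative_eq_intros line0)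

lemma Dv_mult: "smR f \<Longrightarrow> smR g \<Longrightarrow> Dv e (\<lambda>z. f z * g z) = (\<lambda>z. Dv e f z * g z + f z * Dv e g z)"
  by (rule ext, rule Dv_from_deriv) (auto intro!: derivative_eq_intros line0)

lemma Dv_divide: "smR f \<Longrightarrow> smR g \<Longrightarrow> (\<And>z. g z \<noteq> 0) \<Longrightarrow>
    Dv e (\<lambda>z. f z / g z) = (\<lambda>z. (Dv e f z * g z - f z * Dv e g z) / (g z)^2)"
  apply (rule ext, rule Dv_from_deriv)
  apply (rule derivative_eq_intros line0 | assumption | simp)+
  apply (simp add: field_simps power2_eq_square)
  done

lemma Dv_sqrt: "smR f \<Longrightarrow> (\<And>z. f z > 0) \<Longrightarrow>
    Dv e (\<lambda>z. sqrt (f z)) = (\<lambda>z. Dv e f z / (2 * sqrt (f z)))"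
proof (rule ext, rule Dv_from_deriv)
  fix z assume a: "smR f" "\<And>z. f z > 0"
  have "((\<lambda>s. sqrt (f (z + s *\<^sub>R e))) has_real_derivative (inverse (sqrt (f (z + 0 *\<^sub>R e))) / 2) * Dv e f z) (at 0)"
    by (rule DERIV_chain2[OF DERIV_real_sqrt[OF a(2)] line0[OF a(1)]])
  then show "((\<lambda>s. sqrt (f (z + s *\<^sub>R e))) has_real_derivative Dv e f z / (2 * sqrt (f z))) (at 0)"
    by (simp add: field_simps)
qed

lemma Dv_power2: "smR f \<Longrightarrow> Dv e (\<lambda>z. (f z)^2) = (\<lambda>z. 2 * f z * Dv e f z)"
  by (rule ext, rule Dv_from_deriv) (auto intro!: derivative_eq_intros line0)


lemma Ck_components: "Ck k F \<Longrightarrow> CkR k (\<lambda>z. fst (F z)) \<and> CkR k (\<lambda>z. snd (F z))"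
proof (induction k arbitrary: F)
  case 0 then show ?case by (auto intro: continuous_on_fst continuous_on_snd)
next
  case (Suc k)
  then obtain f1 f2 where d: "\<And>z. (F has_derivative (\<lambda>h. fst h *\<^sub>R f1 z + snd h *\<^sub>R f2 z)) (at z)"
    and c: "Ck k f1" "Ck k f2" by auto
  have "CkR (Suc k) (\<lambda>z. fst (F z))"
  proof (rule CkR_SucI[where fa="\<lambda>z. fst (f1 z)" and fb="\<lambda>z. fst (f2 z)"])
    fix z show "((\<lambda>z. fst (F z)) has_derivative (\<lambda>h. fst h * (\<lambda>z. fst (f1 z)) z + snd h * (\<lambda>z. fst (f2 z)) z)) (at z)"
      by (rule has_derivative_eq_rhs[OF has_derivative_fst[OF d]]) (simp add: fun_eq_iff)
  qed (use Suc.IH c in auto)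
  moreover have "CkR (Suc k) (\<lambda>z. snd (F z))"
  proof (rule CkR_SucI[where fa="\<lambda>z. snd (f1 z)" and fb="\<lambda>z. snd (f2 z)"])
    fix z show "((\<lambda>z. snd (F z)) has_derivative (\<lambda>h. fst h * (\<lambda>z. snd (f1 z)) z + snd h * (\<lambda>z. snd (f2 z)) z)) (at z)"
      by (rule has_derivative_eq_rhs[OF has_derivative_snd[OF d]]) (simp add: fun_eq_iff)
  qed (use Suc.IH c in auto)
  ultimately show ?case by blast
qed

lemma smooth_components:
  assumes "smooth_map F"
  shows "smR (\<lambda>z. fst (F z))" "smR (\<lambda>z. snd (F z))"
  using assms Ck_components unfolding smooth_map_def smR_def by blast+

lemma cont_p: "smR f \<Longrightarrow> continuous_on S (\<lambda>q. f (q, t))"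
  by (intro continuous_on_compose2[OF smR_cont[of f]] continuous_intros) auto

lemma cont_t: "smR f \<Longrightarrow> continuous_on S (\<lambda>s. f (p, s))"
  by (intro continuous_on_compose2[OF smR_cont[of f]] continuous_intros) auto

lemma schwarz:
  assumes sf: "smR f"
  shows "Dt (Dp f) = Dp (Dt f)"
proof (rule ext, clarify)
  fix p t :: real
  define a where "a = p - 1"
  define b where "b = p + 1"
  have sp: "smR (Dp f)" and spt: "smR (Dt (Dp f))" and st: "smR (Dt f)"
    using sf smR_Dv by blast+
  have key: "Dt f (x,t) - Dt f (a,t) = integral {a..x} (\<lambda>q. Dt (Dp f) (q,t))" if ax: "a \<le> x" for x
  proof -
    have I: "f (x,s) - f (a,s) = integral {a..x} (\<lambda>q. Dp f (q,s))" for s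
    proof -
      have "((\<lambda>q. Dp f (q,s)) has_integral (f (x,s) - f (a,s))) {a..x}"
        by (rule fundamental_theorem_of_calculus[OF ax])
           (simp add: has_real_derivative_iff_has_vector_derivative[symmetric] smR_Dp_deriv[OF sf])
      then show ?thesis by (simp add: integral_unique)
    qed
    have D1: "((\<lambda>s. f (x,s) - f (a,s)) has_real_derivative Dt f (x,t) - Dt f (a,t)) (at t)"
      by (intro derivative_intros smR_Dt_deriv[OF sf])
    have D2: "((\<lambda>s. integral (cbox a x) (\<lambda>q. Dp f (q,s))) has_field_derivative
               integral (cbox a x) (\<lambda>q. Dt (Dp f) (q,t))) (at t within UNIV)"
    proof (rule leibniz_rule_field_derivative[where f="\<lambda>s q. Dp f (q,s)" and fx="\<lambda>s q. Dt (Dp f) (q,s)"])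
      show "\<And>s q. s \<in> UNIV \<Longrightarrow> q \<in> cbox a x \<Longrightarrow> ((\<lambda>s. Dp f (q,s)) has_field_derivative Dt (Dp f) (q,s)) (at s within UNIV)"
        using smR_Dt_deriv[OF sp] by blast
      show "\<And>s. s \<in> UNIV \<Longrightarrow> (\<lambda>q. Dp f (q,s)) integrable_on cbox a x"
        by (rule integrable_continuous[OF cont_p[OF sp]])
      have "continuous_on UNIV (\<lambda>y::real\<times>real. Dt (Dp f) (snd y, fst y))"
        by (intro continuous_on_compose2[OF smR_cont[OF spt]] continuous_intros) auto
      then show "continuous_on (UNIV \<times> cbox a x) (\<lambda>(s, q). Dt (Dp f) (q,s))"
        by (simp add: case_prod_beta') (rule continuous_on_subset, assumption, simp)
    qed auto
    have "(\<lambda>s. f (x,s) - f (a,s)) = (\<lambda>s. integral {a..x} (\<lambda>q. Dp f (q,s)))" using I by auto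
    with D1 have "((\<lambda>s. integral {a..x} (\<lambda>q. Dp f (q,s))) has_real_derivative Dt f (x,t) - Dt f (a,t)) (at t)"
      by simp
    from DERIV_unique[OF this D2[simplified]] show ?thesis by simp
  qed
  have "((\<lambda>x. integral {a..x} (\<lambda>q. Dt (Dp f) (q,t))) has_vector_derivative Dt (Dp f) (p,t)) (at p within {a..b})"
    by (rule integral_has_vector_derivative[OF cont_p[OF spt]]) (auto simp: a_def b_def)
  then have "((\<lambda>x. integral {a..x} (\<lambda>q. Dt (Dp f) (q,t))) has_real_derivative Dt (Dp f) (p,t)) (at p)"
    by (simp add: has_real_derivative_iff_has_vector_derivative at_within_Icc_at a_def b_def)
  then have "((\<lambda>x. Dt f (a,t) + integral {a..x} (\<lambda>q. Dt (Dp f) (q,t))) has_real_derivative Dt (Dp f) (p,t)) (at p)"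
    by (auto intro!: derivative_eq_intros)
  then have "((\<lambda>x. Dt f (x,t)) has_real_derivative Dt (Dp f) (p,t)) (at p)"
  proof (rule has_field_derivative_transform_within_open[where S="{a<..}"])
    fix x assume "x \<in> {a<..}"
    then show "Dt f (a,t) + integral {a..x} (\<lambda>q. Dt (Dp f) (q,t)) = Dt f (x,t)" using key[of x] by simp
  qed (auto simp: a_def)
  from DERIV_unique[OF this smR_Dp_deriv[OF st]] show "Dt (Dp f) (p,t) = Dp (Dt f) (p,t)" .
qed

definition per :: "(real \<times> real \<Rightarrow> real) \<Rightarrow> bool" where
  "per f = (\<forall>p t. f (p + 1, t) = f (p, t))"

lemma per_Dv: assumes "per f" shows "per (Dv e f)"
  unfolding per_def
proof (intro allI)
  fix p t
  have "(\<lambda>s. f ((p + 1, t) + s *\<^sub>R e)) = (\<lambda>s. f ((p, t) + s *\<^sub>R e))"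
  proof
    fix s
    have "f ((p + s * fst e) + 1, t + s * snd e) = f (p + s * fst e, t + s * snd e)"
      using assms unfolding per_def by blast
    then show "f ((p + 1, t) + s *\<^sub>R e) = f ((p, t) + s *\<^sub>R e)"
      by (cases e) (simp add: algebra_simps)
  qed
  then show "Dv e f (p + 1, t) = Dv e f (p, t)" unfolding Dv_def by simp
qed

lemma per_nat: "per f \<Longrightarrow> f (p + real n, t) = f (p, t)"
proof (induction n)
  case 0 then show ?case by simp
next
  case (Suc n)
  have "f (p + real (Suc n), t) = f ((p + real n) + 1, t)" by (simp add: algebra_simps)
  also have "\<dots> = f (p + real n, t)" using Suc.prems unfolding per_def by blast
  finally show ?case using Suc by simp
qed

lemma per_int: "per f \<Longrightarrow> f (p + real_of_int n, t) = f (p, t)"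
proof (cases "n \<ge> 0")
  case True
  assume "per f"
  then show ?thesis using per_nat[of f p "nat n" t] True by simp
next
  case False
  assume pf: "per f"
  have "f (p + real_of_int n, t) = f ((p + real_of_int n) + real (nat (-n)), t)"
    using per_nat[OF pf, of "p + real_of_int n" "nat (-n)" t] by simp
  also have "\<dots> = f (p, t)" using False by simp
  finally show ?thesis .
qed

lemma per_shift:
  assumes "per f"
  obtains q where "q \<in> {p0..<p0+1}" "f (p, t) = f (q, t)"
proof -
  define n where "n = \<lfloor>p - p0\<rfloor>"
  have "p - real_of_int n \<in> {p0..<p0+1}" unfolding n_def
    by (auto simp: algebra_simps) linarith+
  moreover have "f (p, t) = f (p - real_of_int n, t)"
    using per_int[OF assms, of "p - real_of_int n" n t] by simp
  ultimately show thesis using that by blast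
qed


locale flowctx =
  fixes C :: "real \<Rightarrow> real \<Rightarrow> real \<times> real" and lam p0 :: real
  assumes smooth: "smooth_map (\<lambda>(p, t). C p t)"
    and closed: "\<And>p t. C (p + 1) t = C p t"
    and nondeg1: "\<And>p t. det2 (C p t) (dP C p t) \<noteq> 0"
    and nondeg2: "\<And>p t. det2 (dP C p t) (dP (dP C) p t) \<noteq> 0"
    and flow: "\<And>p t. p \<in> {p0..<p0 + 1} \<Longrightarrow>
        dT C p t = (lam + integral {p0..p} (\<lambda>q. ca_curv C q t * ca_metric C q t)) *\<^sub>R C p t
                   + (ca_curv C p t / 2) *\<^sub>R Cxi C p t"
begin

definition "X = (\<lambda>z. fst (C (fst z) (snd z)))"
definition "Y = (\<lambda>z. snd (C (fst z) (snd z)))"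

lemma smX[simp]: "smR X" and smY[simp]: "smR Y"
  using smooth_components[OF smooth] unfolding X_def Y_def by (simp_all add: case_prod_beta)

lemma smDv[simp]: "smR f \<Longrightarrow> smR (Dv e f)" by (rule smR_Dv)

lemma C_eq: "C p t = (X (p,t), Y (p,t))" by (simp add: X_def Y_def)

lemma vd_pair:
  assumes "smR f" "smR g"
  shows "vector_derivative (\<lambda>q. (f (q,t), g (q,t))) (at p) = (Dp f (p,t), Dp g (p,t))"
proof -
  have "((\<lambda>q. (f (q,t), g (q,t))) has_vector_derivative (Dp f (p,t), Dp g (p,t))) (at p)"
    using has_vector_derivative_Pair[OF smR_Dp_deriv[OF assms(1), THEN has_real_derivative_iff_has_vector_derivative[THEN iffD1]]
         smR_Dp_deriv[OF assms(2), THEN has_real_derivative_iff_has_vector_derivative[THEN iffD1]]] .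
  then show ?thesis by (rule vector_derivative_at)
qed

lemma vd_pair_t:
  assumes "smR f" "smR g"
  shows "vector_derivative (\<lambda>s. (f (p,s), g (p,s))) (at t) = (Dt f (p,t), Dt g (p,t))"
proof -
  have "((\<lambda>s. (f (p,s), g (p,s))) has_vector_derivative (Dt f (p,t), Dt g (p,t))) (at t)"
    using has_vector_derivative_Pair[OF smR_Dt_deriv[OF assms(1), THEN has_real_derivative_iff_has_vector_derivative[THEN iffD1]]
         smR_Dt_deriv[OF assms(2), THEN has_real_derivative_iff_has_vector_derivative[THEN iffD1]]] .
  then show ?thesis by (rule vector_derivative_at)
qed

lemma dP_eq: "dP C p t = (Dp X (p,t), Dp Y (p,t))"
proof -
  have "(\<lambda>q. C q t) = (\<lambda>q. (X (q,t), Y (q,t)))" using C_eq by blast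
  then show ?thesis unfolding dP_def using vd_pair[OF smX smY, of t p] by simp
qed

lemma dPP_eq: "dP (dP C) p t = (Dp (Dp X) (p,t), Dp (Dp Y) (p,t))"
proof -
  have "(\<lambda>q. dP C q t) = (\<lambda>q. (Dp X (q,t), Dp Y (q,t)))" using dP_eq by blast
  then show ?thesis unfolding dP_def[of "dP C"] using vd_pair[OF smDv[OF smX] smDv[OF smY]] by simp
qed

lemma dT_eq: "dT C p t = (Dt X (p,t), Dt Y (p,t))"
proof -
  have "(\<lambda>s. C p s) = (\<lambda>s. (X (p,s), Y (p,s)))" using C_eq by blast
  then show ?thesis unfolding dT_def using vd_pair_t[OF smX smY, of p t] by simp
qed

definition "u = (\<lambda>z. X z * Dp Y z - Y z * Dp X z)"
definition "v = (\<lambda>z. Dp X z * Dp (Dp Y) z - Dp Y z * Dp (Dp X) z)"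

lemma u_nz: "u z \<noteq> 0"
  using nondeg1[of "fst z" "snd z"] unfolding det2_def dP_eq u_def by (simp add: C_eq)

lemma v_nz: "v z \<noteq> 0"
  using nondeg2[of "fst z" "snd z"] unfolding det2_def dP_eq dPP_eq v_def by simp

lemma sm_u[simp]: "smR u" unfolding u_def by (intro smR_diff smR_mult smDv smX smY)
lemma sm_v[simp]: "smR v" unfolding v_def by (intro smR_diff smR_mult smDv smX smY)

lemma Dp_u: "Dp u = (\<lambda>z. X z * Dp (Dp Y) z - Y z * Dp (Dp X) z)"
  unfolding u_def
  by (simp add: Dv_diff Dv_mult smR_mult fun_eq_iff algebra_simps)

lemma Dp_v: "Dp v = (\<lambda>z. Dp X z * Dp (Dp (Dp Y)) z - Dp Y z * Dp (Dp (Dp X)) z)"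
  unfolding v_def
  by (simp add: Dv_diff Dv_mult smR_mult fun_eq_iff algebra_simps)

lemma per_X: "per X" and per_Y: "per Y"
  unfolding per_def X_def Y_def by (simp_all add: closed)

end


lemma alg_pos:
  fixes x y x1 y1 x2 y2 :: real
  assumes n1: "x*x1 + y*y1 = 0" and s: "x1\<^sup>2 + x*x2 + y1\<^sup>2 + y*y2 \<le> 0" and u: "x*y1 - y*x1 \<noteq> 0"
  shows "(x*y1 - y*x1) * (x1*y2 - y1*x2) > 0"
proof -
  define uu where "uu = x*y1 - y*x1"
  define vv where "vv = x1*y2 - y1*x2"
  have id: "(x\<^sup>2+y\<^sup>2) * vv = - uu * (x*x2 + y*y2) + (x*x1 + y*y1) * (x*y2 - y*x2)"
    unfolding uu_def vv_def by (simp add: algebra_simps power2_eq_square)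
  have p1: "x1\<^sup>2 + y1\<^sup>2 > 0"
  proof -
    have "x1 \<noteq> 0 \<or> y1 \<noteq> 0" using u by auto
    then show ?thesis by (auto simp: add_pos_nonneg add_nonneg_pos)
  qed
  have p0: "x\<^sup>2 + y\<^sup>2 > 0"
  proof -
    have "x \<noteq> 0 \<or> y \<noteq> 0" using u by auto
    then show ?thesis by (auto simp: add_pos_nonneg add_nonneg_pos)
  qed
  have id2: "(x\<^sup>2+y\<^sup>2) * vv = - uu * (x*x2 + y*y2)" using id n1 by simp
  have "(x\<^sup>2+y\<^sup>2) * (uu * vv) = uu * ((x\<^sup>2+y\<^sup>2) * vv)" by (simp add: algebra_simps)
  also have "\<dots> = - uu\<^sup>2 * (x*x2 + y*y2)" unfolding id2 by (simp add: power2_eq_square)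
  also have "\<dots> \<ge> uu\<^sup>2 * (x1\<^sup>2 + y1\<^sup>2)"
  proof -
    have "x1\<^sup>2 + y1\<^sup>2 \<le> - (x*x2 + y*y2)" using s by linarith
    from mult_left_mono[OF this, of "uu\<^sup>2"] show ?thesis by (simp add: algebra_simps)
  qed
  finally have "(x\<^sup>2+y\<^sup>2) * (uu * vv) \<ge> uu\<^sup>2 * (x1\<^sup>2 + y1\<^sup>2)" .
  moreover have "uu\<^sup>2 * (x1\<^sup>2 + y1\<^sup>2) > 0" using p1 u unfolding uu_def by simp
  ultimately have "(x\<^sup>2+y\<^sup>2) * (uu * vv) > 0" by linarith
  then show ?thesis using p0 unfolding uu_def vv_def by (simp add: zero_less_mult_iff)
qed

context flowctx
begin

lemma per_u: "per u" and per_v: "per v"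
  unfolding u_def v_def per_def using per_Dv per_X per_Y unfolding per_def by simp_all

lemma uv_pos: "u (p,t) * v (p,t) > 0"
proof -
  define N where "N = (\<lambda>q. (X (q,t))\<^sup>2 + (Y (q,t))\<^sup>2)"
  define n1 where "n1 = (\<lambda>q. X (q,t) * Dp X (q,t) + Y (q,t) * Dp Y (q,t))"
  define s where "s = (\<lambda>q. (Dp X (q,t))\<^sup>2 + X (q,t) * Dp (Dp X) (q,t) + (Dp Y (q,t))\<^sup>2 + Y (q,t) * Dp (Dp Y) (q,t))"
  have dX: "\<And>f q. smR f \<Longrightarrow> ((\<lambda>q. f (q,t)) has_real_derivative Dp f (q,t)) (at q)"
    using smR_Dp_deriv by blast
  have dN: "(N has_real_derivative 2 * n1 q) (at q)" for q
    unfolding N_def n1_def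
    by (rule derivative_eq_intros dX smX smY refl | simp)+
  have dn1: "(n1 has_real_derivative s q) (at q)" for q
    unfolding n1_def s_def
    by (rule derivative_eq_intros dX smX smY smDv refl | simp)+ (simp add: algebra_simps power2_eq_square)
  have contN: "continuous_on {0..1} N" unfolding N_def
    by (intro continuous_intros cont_p smX smY)
  obtain qs where qs: "qs \<in> {0..1}" "\<And>y. y \<in> {0..1} \<Longrightarrow> N y \<le> N qs"
    using continuous_attains_sup[OF compact_Icc _ contN] by auto
  have perN: "per (\<lambda>z. (X z)\<^sup>2 + (Y z)\<^sup>2)" using per_X per_Y unfolding per_def by simp
  have gmax: "N y \<le> N qs" for y
  proof -
    obtain q where "q \<in> {0..<0+1}" "(X (y,t))\<^sup>2 + (Y (y,t))\<^sup>2 = (X (q,t))\<^sup>2 + (Y (q,t))\<^sup>2"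
      using per_shift[OF perN, of 0 y t] by auto
    then show ?thesis using qs(2)[of q] unfolding N_def by auto
  qed
  have n10: "n1 qs = 0"
    using DERIV_local_max[OF dN[of qs] zero_less_one] gmax by simp
  have s0: "s qs \<le> 0"
  proof (rule ccontr)
    assume "\<not> s qs \<le> 0"
    then have "s qs > 0" by simp
    from DERIV_pos_inc_right[OF dn1 this] obtain d where d: "d > 0" "\<And>h. 0 < h \<Longrightarrow> h < d \<Longrightarrow> n1 qs < n1 (qs + h)"
      by blast
    obtain z where z: "qs < z" "z < qs + d/2" "N (qs + d/2) - N qs = (qs + d/2 - qs) * (2 * n1 z)"
      using MVT2[of qs "qs + d/2" N "\<lambda>q. 2 * n1 q"] dN d(1) by auto
    have "n1 z > 0" using d(2)[of "z - qs"] z n10 by simp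
    then have "N (qs + d/2) > N qs" using z d(1) by (simp add: algebra_simps)
    then show False using gmax[of "qs + d/2"] by simp
  qed
  have pos: "u (qs,t) * v (qs,t) > 0"
    using alg_pos[of "X (qs,t)" "Dp X (qs,t)" "Y (qs,t)" "Dp Y (qs,t)" "Dp (Dp X) (qs,t)" "Dp (Dp Y) (qs,t)"]
      n10 s0 u_nz[of "(qs,t)"] unfolding n1_def s_def u_def v_def by simp
  define w where "w = (\<lambda>q. u (q,t) * v (q,t))"
  have cw: "continuous_on S w" for S unfolding w_def by (intro continuous_intros cont_p sm_u sm_v)
  have wnz: "w q \<noteq> 0" for q unfolding w_def using u_nz v_nz by simp
  show ?thesis
  proof (rule ccontr)
    assume "\<not> u (p,t) * v (p,t) > 0"
    then have wp: "w p < 0" using wnz[of p] unfolding w_def by (simp add: not_less less_le)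
    have wq: "w qs > 0" using pos unfolding w_def by simp
    show False
    proof (cases "p \<le> qs")
      case True
      obtain x where "w x = 0" using IVT'[of w p 0 qs, OF _ _ True cw] wp wq by auto
      then show False using wnz by blast
    next
      case False
      obtain x where "w x = 0" using IVT2'[of w p 0 qs, OF _ _ _ cw] wp wq False by auto
      then show False using wnz by blast
    qed
  qed
qed

definition "G = (\<lambda>z. sqrt (v z / u z))"

lemma vu_pos: "v z / u z > 0"
  using uv_pos[of "fst z" "snd z"] by (auto simp: zero_less_divide_iff zero_less_mult_iff)

lemma G_pos: "G z > 0" unfolding G_def using vu_pos by simp
lemma G_nz: "G z \<noteq> 0" using G_pos[of z] by simp
lemma G_sq: "(G z)\<^sup>2 = v z / u z" unfolding G_def using vu_pos[of z] by simp
lemma sm_G[simp]: "smR G" unfolding G_def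
  by (intro smR_sqrt smR_divide sm_u sm_v u_nz vu_pos)
lemma per_G: "per G" using per_u per_v unfolding per_def G_def by simp

end


lemma curv_alg:
  fixes x y x1 y1 x2 y2 g g1 u u1 v v1 :: real
  assumes g: "g > 0" and u: "u \<noteq> 0" and v: "v \<noteq> 0" and gs: "g\<^sup>2 = v / u"
    and g1: "g1 = ((v1 * u - v * u1) / u\<^sup>2) / (2 * g)"
    and ud: "u = x*y1 - y*x1" and u1d: "u1 = x*y2 - y*x2"
  shows "(((1/g) * ((x2*g - x1*g1)/g\<^sup>2)) * y - ((1/g) * ((y2*g - y1*g1)/g\<^sup>2)) * x)
       / ((x1/g) * y - (y1/g) * x)
       = (3/2 * u1 / u - 1/2 * v1 / v) / g"
proof -
  have vv: "v = g\<^sup>2 * u" using gs u by (simp add: field_simps)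
  have gnz: "g \<noteq> 0" using g by simp
  have e1: "((x2*g - x1*g1)/g\<^sup>2) * y - ((y2*g - y1*g1)/g\<^sup>2) * x = (g1 * u - g * u1) / g\<^sup>2"
    unfolding ud u1d by (simp add: diff_divide_distrib[symmetric] algebra_simps)
  have num: "((1/g) * ((x2*g - x1*g1)/g\<^sup>2)) * y - ((1/g) * ((y2*g - y1*g1)/g\<^sup>2)) * x = ((g1 * u - g * u1) / g\<^sup>2) / g"
  proof -
    have "((1/g) * ((x2*g - x1*g1)/g\<^sup>2)) * y - ((1/g) * ((y2*g - y1*g1)/g\<^sup>2)) * x
        = (((x2*g - x1*g1)/g\<^sup>2) * y - ((y2*g - y1*g1)/g\<^sup>2) * x) / g"
      using gnz by (simp add: field_simps)
    then show ?thesis unfolding e1 .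
  qed
  have den: "(x1/g) * y - (y1/g) * x = - u / g"
    unfolding ud by (simp add: algebra_simps diff_divide_distrib[symmetric])
  have g1': "g1 * u = (v1 - g\<^sup>2 * u1) / (2 * g)"
    unfolding g1 vv using u g by (simp add: field_simps power2_eq_square)
  have lhs: "(((g1 * u - g * u1) / g\<^sup>2) / g) / (- u / g) = (g * u1 - g1 * u) / (g\<^sup>2 * u)"
    using gnz u by (simp add: field_simps)
  also have "\<dots> = (3 * g\<^sup>2 * u1 - v1) / (2 * g^3 * u)"
    unfolding diff_divide_distrib g1' using gnz u by (simp add: field_simps power2_eq_square power3_eq_cube)
  also have "\<dots> = (3/2 * u1 / u - 1/2 * v1 / v) / g"
    unfolding vv using gnz u by (simp add: field_simps power2_eq_square power3_eq_cube)
  finally show ?thesis unfolding num den .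
qed

context flowctx
begin

definition "P = (\<lambda>z. 3/2 * Dp u z / u z - 1/2 * Dp v z / v z)"

lemma sm_P[simp]: "smR P" unfolding P_def
  by (intro smR_diff smR_divide smR_mult smR_const smDv sm_u sm_v u_nz v_nz)

lemma per_P: "per P" using per_u per_v per_Dv[OF per_u] per_Dv[OF per_v] unfolding per_def P_def by simp

lemma fst_C: "fst (C p t) = X (p,t)" and snd_C: "snd (C p t) = Y (p,t)"
  by (simp_all add: X_def Y_def)

lemma ca_metric_eq: "ca_metric C p t = G (p,t)"
  unfolding ca_metric_def G_def det2_def dP_eq dPP_eq u_def v_def by (simp add: C_eq)

lemma Cxi_eq: "Cxi C p t = (Dp X (p,t) / G (p,t), Dp Y (p,t) / G (p,t))"
  unfolding Cxi_def ca_metric_eq dP_eq by simp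

lemma sm_XG: "smR (\<lambda>z. Dp X z / G z)" "smR (\<lambda>z. Dp Y z / G z)"
  by (intro smR_divide smDv smX smY sm_G G_nz)+

lemma dPCxi_eq: "dP (Cxi C) p t = (Dp (\<lambda>z. Dp X z / G z) (p,t), Dp (\<lambda>z. Dp Y z / G z) (p,t))"
proof -
  have "(\<lambda>q. Cxi C q t) = (\<lambda>q. ((\<lambda>z. Dp X z / G z) (q,t), (\<lambda>z. Dp Y z / G z) (q,t)))"
    using Cxi_eq by auto
  then show ?thesis unfolding dP_def[of "Cxi C"] using vd_pair[OF sm_XG] by simp
qed

lemma Dp_G: "Dp G = (\<lambda>z. ((Dp v z * u z - v z * Dp u z) / (u z)\<^sup>2) / (2 * G z))"
proof -
  have "Dp G = Dp (\<lambda>z. sqrt (v z / u z))" unfolding G_def ..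
  also have "\<dots> = (\<lambda>z. Dp (\<lambda>z. v z / u z) z / (2 * sqrt (v z / u z)))"
    by (rule Dv_sqrt) (intro smR_divide sm_u sm_v u_nz, rule vu_pos)
  also have "\<dots> = (\<lambda>z. ((Dp v z * u z - v z * Dp u z) / (u z)\<^sup>2) / (2 * G z))"
    by (subst Dv_divide) (simp_all add: u_nz G_def)
  finally show ?thesis .
qed

lemma Dp_XG: "Dp (\<lambda>z. Dp f z / G z) = (\<lambda>z. (Dp (Dp f) z * G z - Dp f z * Dp G z) / (G z)\<^sup>2)" if "smR f"
  by (rule Dv_divide) (simp_all add: that G_nz)

lemma ca_curv_eq: "ca_curv C p t = P (p,t) / G (p,t)"
proof -
  let ?g = "G (p,t)" and ?g1 = "Dp G (p,t)" and ?x = "X (p,t)" and ?y = "Y (p,t)"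
  let ?x1 = "Dp X (p,t)" and ?y1 = "Dp Y (p,t)" and ?x2 = "Dp (Dp X) (p,t)" and ?y2 = "Dp (Dp Y) (p,t)"
  have "ca_curv C p t = (((1/?g) * ((?x2*?g - ?x1*?g1)/?g\<^sup>2)) * ?y - ((1/?g) * ((?y2*?g - ?y1*?g1)/?g\<^sup>2)) * ?x)
       / ((?x1/?g) * ?y - (?y1/?g) * ?x)"
    unfolding ca_curv_def Cxixi_def ca_metric_eq dPCxi_eq Dp_XG[OF smX] Dp_XG[OF smY] Cxi_eq det2_def
    by (simp only: fst_conv snd_conv scaleR_Pair real_scaleR_def fst_C snd_C)
  also have "\<dots> = (3/2 * Dp u (p,t) / u (p,t) - 1/2 * Dp v (p,t) / v (p,t)) / ?g"
    by (rule curv_alg[OF G_pos u_nz v_nz G_sq Dp_G[THEN fun_cong] u_def[THEN fun_cong] Dp_u[THEN fun_cong]])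
  finally show ?thesis unfolding P_def by simp
qed

definition "W = (\<lambda>z. (P z)\<^sup>2 / G z)"

lemma energy_eq: "energy C t = integral {0..1} (\<lambda>p. W (p,t))"
proof -
  have "(ca_curv C p t)\<^sup>2 * ca_metric C p t = W (p,t)" for p
    unfolding ca_curv_eq ca_metric_eq W_def using G_nz[of "(p,t)"] by (simp add: power2_eq_square)
  then show ?thesis unfolding energy_def by simp
qed

end


context flowctx
begin

definition "A = (\<lambda>z. (Dt X z * Dp Y z - Dt Y z * Dp X z) / u z)"
definition "Gm = (\<lambda>z. (X z * Dt Y z - Y z * Dt X z) / u z)"

lemma sm_A[simp]: "smR A" unfolding A_def
  by (intro smR_diff smR_divide smR_mult smDv smX smY sm_u u_nz)
lemma sm_Gm[simp]: "smR Gm" unfolding Gm_def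
  by (intro smR_diff smR_divide smR_mult smDv smX smY sm_u u_nz)

lemma per_A: "per A" unfolding A_def per_def
  using per_Dv[OF per_X] per_Dv[OF per_Y] per_X per_Y per_u unfolding per_def by simp
lemma per_Gm: "per Gm" unfolding Gm_def per_def
  using per_Dv[OF per_X] per_Dv[OF per_Y] per_X per_Y per_u unfolding per_def by simp

lemma u_pt: "u z = X z * Dp Y z - Y z * Dp X z" unfolding u_def ..
lemma v_pt: "v z = Dp X z * Dp (Dp Y) z - Dp Y z * Dp (Dp X) z" unfolding v_def ..

lemma decompX: "Dt X z = A z * X z + Gm z * Dp X z"
proof -
  have num: "(Dt X z * Dp Y z - Dt Y z * Dp X z) * X z + (X z * Dt Y z - Y z * Dt X z) * Dp X z = Dt X z * u z"
    unfolding u_pt by (simp add: algebra_simps)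
  have "A z * X z + Gm z * Dp X z = ((Dt X z * Dp Y z - Dt Y z * Dp X z) * X z + (X z * Dt Y z - Y z * Dt X z) * Dp X z) / u z"
    unfolding A_def Gm_def by (simp add: add_divide_distrib)
  also have "\<dots> = Dt X z" unfolding num using u_nz[of z] by simp
  finally show ?thesis ..
qed

lemma decompY: "Dt Y z = A z * Y z + Gm z * Dp Y z"
proof -
  have num: "(Dt X z * Dp Y z - Dt Y z * Dp X z) * Y z + (X z * Dt Y z - Y z * Dt X z) * Dp Y z = Dt Y z * u z"
    unfolding u_pt by (simp add: algebra_simps)
  have "A z * Y z + Gm z * Dp Y z = ((Dt X z * Dp Y z - Dt Y z * Dp X z) * Y z + (X z * Dt Y z - Y z * Dt X z) * Dp Y z) / u z"
    unfolding A_def Gm_def by (simp add: add_divide_distrib)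
  also have "\<dots> = Dt Y z" unfolding num using u_nz[of z] by simp
  finally show ?thesis ..
qed

lemma flow_AG:
  assumes p: "p \<in> {p0..<p0+1}"
  shows "A (p,t) = lam + integral {p0..p} (\<lambda>q. P (q,t))" "Gm (p,t) = P (p,t) / (2 * (G (p,t))\<^sup>2)"
proof -
  have cm: "ca_curv C q t * ca_metric C q t = P (q,t)" for q
    unfolding ca_curv_eq ca_metric_eq using G_nz[of "(q,t)"] by simp
  define a where "a = lam + integral {p0..p} (\<lambda>q. P (q,t))"
  define c where "c = P (p,t) / (2 * (G (p,t))\<^sup>2)"
  have f: "(Dt X (p,t), Dt Y (p,t)) = a *\<^sub>R (X (p,t), Y (p,t)) + (P (p,t) / G (p,t) / 2) *\<^sub>R (Dp X (p,t) / G (p,t), Dp Y (p,t) / G (p,t))"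
    using flow[OF p, of t] unfolding cm unfolding dT_eq ca_curv_eq Cxi_eq a_def by (simp add: C_eq)
  have xt: "Dt X (p,t) = a * X (p,t) + c * Dp X (p,t)" and yt: "Dt Y (p,t) = a * Y (p,t) + c * Dp Y (p,t)"
    using f unfolding c_def by (simp_all add: power2_eq_square)
  have un: "u (p,t) \<noteq> 0" by (rule u_nz)
  show "A (p,t) = lam + integral {p0..p} (\<lambda>q. P (q,t))"
    unfolding a_def[symmetric] A_def using un unfolding u_pt xt yt by (simp add: field_simps; simp add: algebra_simps)
  show "Gm (p,t) = P (p,t) / (2 * (G (p,t))\<^sup>2)"
    unfolding c_def[symmetric] Gm_def using un unfolding u_pt xt yt by (simp add: field_simps; simp add: algebra_simps)
qed

lemma per_shift2:
  obtains q where "q \<in> {p0..<p0+1}" "\<And>f. per f \<Longrightarrow> f (p, t) = f (q, t)"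
proof -
  define n where "n = \<lfloor>p - p0\<rfloor>"
  have h1: "p - real_of_int n \<in> {p0..<p0+1}" unfolding n_def
    by (auto simp: algebra_simps) linarith+
  have h2: "f (p, t) = f (p - real_of_int n, t)" if "per f" for f
    using per_int[OF that, of "p - real_of_int n" n t] by simp
  show thesis by (rule that[OF h1 h2])
qed

lemma Gm_eq: "Gm z = P z * u z / (2 * v z)"
proof -
  obtain p t where z: "z = (p,t)" by (cases z)
  have pr: "per (\<lambda>z. P z * u z / (2 * v z))" using per_P per_u per_v unfolding per_def by simp
  obtain q where q: "q \<in> {p0..<p0+1}" "\<And>f. per f \<Longrightarrow> f (p, t) = f (q, t)" by (rule per_shift2[where p=p and t=t]) blast
  have "Gm (q,t) = P (q,t) * u (q,t) / (2 * v (q,t))"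
    unfolding flow_AG(2)[OF q(1)] G_sq using u_nz[of "(q,t)"] v_nz[of "(q,t)"] by (simp add: field_simps)
  then show ?thesis unfolding z using q(2)[OF per_Gm] q(2)[OF pr] by simp
qed

end


lemma alg_ut:
  fixes x y x1 y1 x2 y2 a c c1 p :: real
  shows "(a * x + c * x1) * y1 + x * (p * y + a * y1 + c1 * y1 + c * y2) - (a * y + c * y1) * x1 - y * (p * x + a * x1 + c1 * x1 + c * x2)
         = 2 * a * (x * y1 - y * x1) + c1 * (x * y1 - y * x1) + c * (x * y2 - y * x2)"
  by (simp add: algebra_simps)

lemma alg_vt:
  fixes x y x1 y1 x2 y2 x3 y3 a c c1 c11 p p1 :: real
  shows "(p * x + a * x1 + c1 * x1 + c * x2) * y2 + x1 * (p1 * y + 2 * p * y1 + a * y2 + c11 * y1 + 2 * c1 * y2 + c * y3)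
         - (p * y + a * y1 + c1 * y1 + c * y2) * x2 - y1 * (p1 * x + 2 * p * x1 + a * x2 + c11 * x1 + 2 * c1 * x2 + c * x3)
     = p * (x * y2 - y * x2) - p1 * (x * y1 - y * x1) + 2 * a * (x1 * y2 - y1 * x2) + 3 * c1 * (x1 * y2 - y1 * x2) + c * (x1 * y3 - y1 * x3)"
  by (simp add: algebra_simps)

lemma alg_Q:
  fixes u v u1 v1 a c c1 p p1 g g1 :: real
  assumes u: "u \<noteq> 0" and v: "v \<noteq> 0" and g: "g > 0" and gs: "g\<^sup>2 = v / u"
    and pd: "p = 3/2 * u1 / u - 1/2 * v1 / v" and cd: "c = p * u / (2 * v)"
    and g1: "g1 = ((v1 * u - v * u1) / u\<^sup>2) / (2 * g)"
  shows "3/2 * (2 * a * u + c1 * u + c * u1) / u - 1/2 * (p * u1 - p1 * u + 2 * a * v + 3 * c1 * v + c * v1) / v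
       = 2 * a + ((p1 * g - p * g1) / g\<^sup>2) / (2 * g)"
proof -
  have vv: "v = g\<^sup>2 * u" using gs u by (simp add: field_simps)
  have gnz: "g \<noteq> 0" using g by simp
  have lhs: "3/2 * (2 * a * u + c1 * u + c * u1) / u - 1/2 * (p * u1 - p1 * u + 2 * a * v + 3 * c1 * v + c * v1) / v
      = 2 * a + c * p + (p1 * u - p * u1) / (2 * v)"
    unfolding pd using u v by (simp add: field_simps)
  have rhs: "((p1 * g - p * g1) / g\<^sup>2) / (2 * g) = p1 * u / (2 * v) - p * (v1 * u - v * u1) / (4 * v\<^sup>2)"
    unfolding g1 vv using u gnz by (simp add: field_simps power2_eq_square)
  show ?thesis unfolding lhs rhs unfolding cd pd using u v by (simp add: field_simps power2_eq_square)
qed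

lemma alg_Gt:
  fixes u v u1 v1 a c c1 p p1 :: real
  assumes u: "u \<noteq> 0" and v: "v \<noteq> 0"
    and pd: "p = 3/2 * u1 / u - 1/2 * v1 / v" and cd: "c = p * u / (2 * v)"
    and c1d: "c1 = ((p1 * u + p * u1) * (2 * v) - p * u * (2 * v1)) / (2 * v)\<^sup>2"
  shows "((p * u1 - p1 * u + 2 * a * v + 3 * c1 * v + c * v1) * u - v * (2 * a * u + c1 * u + c * u1)) / u\<^sup>2 = p\<^sup>2"
  unfolding c1d cd pd using u v by (simp add: field_simps power2_eq_square)

lemma alg_Wt:
  fixes p p1 r1 g g1 :: real
  assumes g: "g > 0"
  shows "(2 * p * (2 * p + (r1 * (2 * g) - ((p1 * g - p * g1) / g\<^sup>2) * (2 * g1)) / (2 * g)\<^sup>2) * g - p\<^sup>2 * (p\<^sup>2 / (2 * g))) / g\<^sup>2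
     = (((p1 * ((p1 * g - p * g1) / g\<^sup>2) + p * r1) * g\<^sup>2 - p * ((p1 * g - p * g1) / g\<^sup>2) * (2 * g * g1)) / (g\<^sup>2)\<^sup>2)
       - ((p1 * g - p * g1) / g\<^sup>2)\<^sup>2 / g - p^4 / (2 * g^3) + 4 * p\<^sup>2 / g"
  using g by (simp add: field_simps power2_eq_square power3_eq_cube eval_nat_numeral)

context flowctx
begin

lemma DpA: "Dp A = P"
proof (rule ext, clarify)
  fix p t
  have inner: "Dp A (q,t) = P (q,t)" if q: "q \<in> {p0<..<p0+1}" for q
  proof -
    have "((\<lambda>x. integral {p0..x} (\<lambda>q. P (q,t))) has_vector_derivative P (q,t)) (at q within {p0..p0+1})"
      by (rule integral_has_vector_derivative[OF cont_p[OF sm_P]]) (use q in auto)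
    then have "((\<lambda>x. integral {p0..x} (\<lambda>q. P (q,t))) has_real_derivative P (q,t)) (at q)"
      using q by (simp add: has_real_derivative_iff_has_vector_derivative at_within_Icc_at)
    then have "((\<lambda>x. lam + integral {p0..x} (\<lambda>q. P (q,t))) has_real_derivative P (q,t)) (at q)"
      by (auto intro!: derivative_eq_intros)
    then have "((\<lambda>x. A (x,t)) has_real_derivative P (q,t)) (at q)"
    proof (rule has_field_derivative_transform_within_open[where S="{p0<..<p0+1}"])
      fix x assume "x \<in> {p0<..<p0+1}"
      then show "lam + integral {p0..x} (\<lambda>q. P (q,t)) = A (x,t)" using flow_AG(1)[of x t] by auto
    qed (use q in auto)
    from DERIV_unique[OF smR_Dp_deriv[OF sm_A] this] show ?thesis .
  qed
  define h where "h = (\<lambda>z. Dp A z - P z)"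
  have perh: "per h" unfolding h_def using per_Dv[OF per_A] per_P unfolding per_def by simp
  have smh: "smR h" unfolding h_def by (intro smR_diff smDv sm_A sm_P)
  have h0: "h (q,t) = 0" if qq: "q \<in> {p0..<p0+1}" for q
  proof (cases "q = p0")
    case False then show ?thesis using inner[of q] qq unfolding h_def by auto
  next
    case True
    have "isCont (\<lambda>x. h (x,t)) p0"
      using cont_p[OF smh, of UNIV t] continuous_on_eq_continuous_at[of UNIV] by auto
    then have c: "((\<lambda>x. h (x,t)) \<longlongrightarrow> h (p0,t)) (at_right p0)"
      by (simp add: isCont_def filterlim_at_split)
    have e: "((\<lambda>x. h (x,t)) \<longlongrightarrow> 0) (at_right p0)"
    proof (rule tendsto_eventually)
      show "\<forall>\<^sub>F x in at_right p0. h (x,t) = 0"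
        unfolding eventually_at_right_field using inner unfolding h_def by (intro exI[of _ "p0+1"]) auto
    qed
    from tendsto_unique[OF trivial_limit_at_right_real c e] show ?thesis using True by simp
  qed
  obtain q where q: "q \<in> {p0..<p0+1}" "\<And>f. per f \<Longrightarrow> f (p,t) = f (q,t)"
    by (rule per_shift2[where p=p and t=t]) blast
  show "Dp A (p,t) = P (p,t)" using q(2)[OF perh] h0[OF q(1)] unfolding h_def by simp
qed

lemma Gm_fun: "Gm = (\<lambda>z. P z * u z / (2 * v z))" by (rule ext) (rule Gm_eq)

lemma DpGm: "Dp Gm z = ((Dp P z * u z + P z * Dp u z) * (2 * v z) - P z * u z * (2 * Dp v z)) / (2 * v z)\<^sup>2"
proof -
  have d1: "Dp (\<lambda>z. P z * u z / (2 * v z)) = (\<lambda>z. (Dp (\<lambda>z. P z * u z) z * (2 * v z) - P z * u z * Dp (\<lambda>z. 2 * v z) z) / (2 * v z)\<^sup>2)"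
    by (rule Dv_divide) (auto intro!: smR_mult simp: v_nz)
  have d2: "Dp (\<lambda>z. P z * u z) = (\<lambda>z. Dp P z * u z + P z * Dp u z)" by (rule Dv_mult) simp_all
  have d3: "Dp (\<lambda>z. 2 * v z) = (\<lambda>z. 0 * v z + 2 * Dp v z)"
    using Dv_mult[of "\<lambda>z. 2" v "(1,0)"] by simp
  show ?thesis unfolding Gm_fun d1 d2 d3 by simp
qed

lemma Dt1:
  assumes sf: "smR f" and df: "\<And>z. Dt f z = A z * f z + Gm z * Dp f z"
  shows "Dt (Dp f) z = P z * f z + A z * Dp f z + Dp Gm z * Dp f z + Gm z * Dp (Dp f) z"
proof -
  have e: "Dt f = (\<lambda>z. A z * f z + Gm z * Dp f z)" using df by auto
  have "Dt (Dp f) = Dp (Dt f)" by (rule schwarz[OF sf])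
  also have "\<dots> = Dp (\<lambda>z. A z * f z + Gm z * Dp f z)" unfolding e ..
  finally have "Dt (Dp f) z = Dp (\<lambda>z. A z * f z + Gm z * Dp f z) z" by simp
  then show ?thesis by (simp add: Dv_add Dv_mult smR_mult sf DpA algebra_simps)
qed

lemma Dt2:
  assumes sf: "smR f" and df: "\<And>z. Dt f z = A z * f z + Gm z * Dp f z"
  shows "Dt (Dp (Dp f)) z = Dp P z * f z + 2 * P z * Dp f z + A z * Dp (Dp f) z + Dp (Dp Gm) z * Dp f z
            + 2 * Dp Gm z * Dp (Dp f) z + Gm z * Dp (Dp (Dp f)) z"
proof -
  have e: "Dt (Dp f) = (\<lambda>z. P z * f z + A z * Dp f z + Dp Gm z * Dp f z + Gm z * Dp (Dp f) z)"
    using Dt1[OF sf df] by auto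
  have "Dt (Dp (Dp f)) = Dp (Dt (Dp f))" by (rule schwarz) (simp add: sf)
  also have "\<dots> = Dp (\<lambda>z. P z * f z + A z * Dp f z + Dp Gm z * Dp f z + Gm z * Dp (Dp f) z)" unfolding e ..
  finally have "Dt (Dp (Dp f)) z = Dp (\<lambda>z. P z * f z + A z * Dp f z + Dp Gm z * Dp f z + Gm z * Dp (Dp f) z) z" by simp
  then show ?thesis by (simp add: Dv_add Dv_mult smR_mult smR_add sf DpA algebra_simps)
qed

lemma Dt_u: "Dt u z = 2 * A z * u z + Dp Gm z * u z + Gm z * Dp u z"
proof -
  have "Dt u z = Dt X z * Dp Y z + X z * Dt (Dp Y) z - (Dt Y z * Dp X z + Y z * Dt (Dp X) z)"
    unfolding u_def by (simp add: Dv_diff Dv_mult smR_mult)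
  also have "\<dots> = 2 * A z * u z + Dp Gm z * u z + Gm z * Dp u z"
    unfolding decompX decompY Dt1[OF smX decompX] Dt1[OF smY decompY] Dp_u u_pt
    by (simp add: algebra_simps)
  finally show ?thesis .
qed

lemma Dt_v: "Dt v z = P z * Dp u z - Dp P z * u z + 2 * A z * v z + 3 * Dp Gm z * v z + Gm z * Dp v z"
proof -
  have "Dt v z = Dt (Dp X) z * Dp (Dp Y) z + Dp X z * Dt (Dp (Dp Y)) z - (Dt (Dp Y) z * Dp (Dp X) z + Dp Y z * Dt (Dp (Dp X)) z)"
    unfolding v_def by (simp add: Dv_diff Dv_mult smR_mult)
  also have "\<dots> = P z * Dp u z - Dp P z * u z + 2 * A z * v z + 3 * Dp Gm z * v z + Gm z * Dp v z"
    unfolding Dt1[OF smX decompX] Dt1[OF smY decompY] Dt2[OF smX decompX] Dt2[OF smY decompY] Dp_u Dp_v u_pt v_pt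
    by (simp add: algebra_simps)
  finally show ?thesis .
qed

end


context flowctx
begin

definition "Q = (\<lambda>z. 3/2 * Dt u z / u z - 1/2 * Dt v z / v z)"
definition "R = (\<lambda>z. (Dp P z * G z - P z * Dp G z) / (G z)\<^sup>2)"
definition "H = (\<lambda>z. P z * R z / (G z)\<^sup>2)"

lemma sm_R[simp]: "smR R" unfolding R_def
  by (intro smR_diff smR_divide smR_mult smDv sm_P sm_G smR_power) (simp add: G_nz)
lemma sm_W[simp]: "smR W" unfolding W_def
  by (intro smR_divide smR_power sm_P sm_G G_nz)
lemma sm_H[simp]: "smR H" unfolding H_def
  by (intro smR_divide smR_mult smR_power sm_P sm_R sm_G) (simp add: G_nz)
lemma per_H: "per H" unfolding H_def R_def per_def
  using per_P per_G per_Dv[OF per_P] per_Dv[OF per_G] unfolding per_def by simp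

lemma Q_eq: "Q z = 2 * A z + R z / (2 * G z)"
  unfolding Q_def R_def Dt_u Dt_v
  by (rule alg_Q[OF u_nz v_nz G_pos G_sq _ Gm_eq Dp_G[THEN fun_cong]]) (simp add: P_def)

lemma Q_fun: "Q = (\<lambda>z. 2 * A z + R z / (2 * G z))" by (rule ext) (rule Q_eq)

lemma DtG: "Dt G z = (P z)\<^sup>2 / (2 * G z)"
proof -
  have "Dt G = Dt (\<lambda>z. sqrt (v z / u z))" unfolding G_def ..
  also have "\<dots> = (\<lambda>z. Dt (\<lambda>z. v z / u z) z / (2 * sqrt (v z / u z)))"
    by (rule Dv_sqrt) (intro smR_divide sm_u sm_v u_nz, rule vu_pos)
  also have "\<dots> = (\<lambda>z. ((Dt v z * u z - v z * Dt u z) / (u z)\<^sup>2) / (2 * G z))"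
    by (subst Dv_divide) (simp_all add: u_nz G_def)
  finally have "Dt G z = ((Dt v z * u z - v z * Dt u z) / (u z)\<^sup>2) / (2 * G z)" by simp
  also have "\<dots> = (P z)\<^sup>2 / (2 * G z)"
    unfolding Dt_u Dt_v
    by (subst alg_Gt[OF u_nz v_nz _ Gm_eq DpGm]) (simp_all add: P_def)
  finally show ?thesis .
qed

lemma DtP: "Dt P = Dp Q"
  unfolding P_def Q_def
  by (simp add: Dv_diff Dv_divide Dv_mult smR_mult smR_divide u_nz v_nz schwarz) (simp add: fun_eq_iff algebra_simps)

lemma DtW: "Dt W z = Dp H z - (R z)\<^sup>2 / G z - (P z)^4 / (2 * (G z)^3) + 4 * (P z)\<^sup>2 / G z"
proof -
  have dW: "Dt W z = (2 * P z * Dt P z * G z - (P z)\<^sup>2 * Dt G z) / (G z)\<^sup>2"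
    unfolding W_def by (simp add: Dv_divide Dv_power2 G_nz smR_power)
  have dQ: "Dp Q z = 2 * P z + (Dp R z * (2 * G z) - R z * (2 * Dp G z)) / (2 * G z)\<^sup>2"
    unfolding Q_fun by (simp add: Dv_add Dv_divide Dv_mult smR_mult smR_divide G_nz DpA)
  have dH: "Dp H z = ((Dp P z * R z + P z * Dp R z) * (G z)\<^sup>2 - P z * R z * (2 * G z * Dp G z)) / ((G z)\<^sup>2)\<^sup>2"
    unfolding H_def by (simp add: Dv_divide Dv_mult Dv_power2 smR_mult smR_power G_nz)
  have Rz: "R z = (Dp P z * G z - P z * Dp G z) / (G z)\<^sup>2" unfolding R_def ..
  show ?thesis
    unfolding dW DtP dQ dH DtG Rz
    by (rule alg_Wt[OF G_pos])
qed

end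


lemma int_deriv:
  assumes sf: "smR f"
  shows "((\<lambda>s. integral {0..1} (\<lambda>q. f (q,s))) has_real_derivative integral {0..1} (\<lambda>q. Dt f (q,t))) (at t)"
proof -
  have st: "smR (Dt f)" using sf smR_Dv by blast
  have "((\<lambda>s. integral (cbox 0 1) (\<lambda>q. f (q,s))) has_field_derivative integral (cbox 0 1) (\<lambda>q. Dt f (q,t))) (at t within UNIV)"
  proof (rule leibniz_rule_field_derivative[where f="\<lambda>s q. f (q,s)" and fx="\<lambda>s q. Dt f (q,s)"])
    show "\<And>s q. s \<in> UNIV \<Longrightarrow> q \<in> cbox 0 1 \<Longrightarrow> ((\<lambda>s. f (q,s)) has_field_derivative Dt f (q,s)) (at s within UNIV)"
      using smR_Dt_deriv[OF sf] by blast
    show "\<And>s. s \<in> UNIV \<Longrightarrow> (\<lambda>q. f (q,s)) integrable_on cbox 0 1"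
      by (rule integrable_continuous[OF cont_p[OF sf]])
    have "continuous_on UNIV (\<lambda>y::real\<times>real. Dt f (snd y, fst y))"
      by (intro continuous_on_compose2[OF smR_cont[OF st]] continuous_intros) auto
    then show "continuous_on (UNIV \<times> cbox 0 1) (\<lambda>(s, q). Dt f (q,s))"
      by (simp add: case_prod_beta') (rule continuous_on_subset, assumption, simp)
  qed auto
  then show ?thesis by simp
qed

lemma intble: "smR f \<Longrightarrow> (\<lambda>q. f (q,t)) integrable_on {a..b}"
  by (rule integrable_continuous_real[OF cont_p])

context flowctx
begin

definition "E = (\<lambda>t. integral {0..1} (\<lambda>p. W (p,t)))"
definition "L = (\<lambda>t. integral {0..1} (\<lambda>p. G (p,t)))"
definition "E' = (\<lambda>t. integral {0..1} (\<lambda>p. Dt W (p,t)))"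

lemma W_nonneg: "W z \<ge> 0" unfolding W_def using G_pos[of z] by simp

lemma E_nonneg: "E t \<ge> 0" unfolding E_def
  by (rule integral_nonneg[OF intble[OF sm_W]]) (rule W_nonneg)

lemma L_nonneg: "L t \<ge> 0" unfolding L_def
  by (rule integral_nonneg[OF intble[OF sm_G]]) (simp add: less_imp_le[OF G_pos])

lemma dE: "(E has_real_derivative E' t) (at t)"
  unfolding E_def E'_def by (rule int_deriv[OF sm_W])

lemma dL: "(L has_real_derivative E t / 2) (at t)"
proof -
  have "(L has_real_derivative integral {0..1} (\<lambda>p. Dt G (p,t))) (at t)"
    unfolding L_def by (rule int_deriv[OF sm_G])
  moreover have "integral {0..1} (\<lambda>p. Dt G (p,t)) = E t / 2"
  proof -
    have "(\<lambda>p. Dt G (p,t)) = (\<lambda>p. W (p,t) * (1/2))"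
      unfolding DtG W_def using G_nz by (auto simp: field_simps)
    then show ?thesis unfolding E_def by simp
  qed
  ultimately show ?thesis by simp
qed

lemma E'_le: "E' t \<le> 4 * E t"
proof -
  have "E' t \<le> integral {0..1} (\<lambda>p. Dp H (p,t) + 4 * W (p,t))"
    unfolding E'_def
  proof (rule integral_le)
    show "(\<lambda>p. Dt W (p,t)) integrable_on {0..1}" by (rule intble) simp
    show "(\<lambda>p. Dp H (p,t) + 4 * W (p,t)) integrable_on {0..1}"
      by (rule intble[of "\<lambda>z. Dp H z + 4 * W z", simplified]) (intro smR_add smR_mult smDv sm_H sm_W smR_const)
    fix p
    have a: "(R (p,t))\<^sup>2 / G (p,t) \<ge> 0" using G_pos[of "(p,t)"] by simp
    have b: "(P (p,t))^4 / (2 * (G (p,t))^3) \<ge> 0" using G_pos[of "(p,t)"] by (simp add: zero_le_even_power)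
    show "Dt W (p,t) \<le> Dp H (p,t) + 4 * W (p,t)"
      unfolding DtW unfolding W_def using a b by (simp add: algebra_simps)
  qed
  also have "\<dots> = integral {0..1} (\<lambda>p. Dp H (p,t)) + 4 * E t"
    unfolding E_def
    by (subst integral_add) (auto intro: intble)
  also have "integral {0..1} (\<lambda>p. Dp H (p,t)) = 0"
  proof -
    have "((\<lambda>p. Dp H (p,t)) has_integral (H (1,t) - H (0,t))) {0..1}"
      by (rule fundamental_theorem_of_calculus)
         (simp_all add: has_real_derivative_iff_has_vector_derivative[symmetric] smR_Dp_deriv)
    moreover have "H (1,t) = H (0,t)" using per_H unfolding per_def by (metis add_0)
    ultimately show ?thesis by (simp add: integral_unique)
  qed
  finally show ?thesis by simp
qed

lemma decay:
  assumes "s \<le> t"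
  shows "E s \<ge> exp (-4 * (t - s)) * E t"
proof -
  define m where "m = (\<lambda>x. exp (-4 * x) * E x)"
  have "m s \<ge> m t"
  proof (rule DERIV_nonpos_imp_nonincreasing[OF assms])
    fix x
    have d1: "((\<lambda>x. -4 * x) has_real_derivative -4) (at x)"
      by (rule DERIV_cmult_Id)
    have d2: "((\<lambda>x. exp (-4 * x)) has_real_derivative exp (-4 * x) * (-4)) (at x)"
      by (rule DERIV_fun_exp[OF d1])
    have "(m has_real_derivative exp (-4 * x) * (-4) * E x + E' x * exp (-4 * x)) (at x)"
      unfolding m_def by (rule DERIV_mult[OF d2 dE])
    moreover have "exp (-4 * x) * (-4) * E x + E' x * exp (-4 * x) \<le> 0"
    proof -
      have "exp (-4 * x) * (-4) * E x + E' x * exp (-4 * x) = exp (-4 * x) * (E' x - 4 * E x)"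
        by (simp add: algebra_simps)
      also have "\<dots> \<le> 0" using E'_le[of x] by (intro mult_nonneg_nonpos) auto
      finally show ?thesis .
    qed
    ultimately show "\<exists>y. (m has_real_derivative y) (at x) \<and> y \<le> 0" by blast
  qed
  then have h: "exp (-4 * t) * E t \<le> exp (-4 * s) * E s" unfolding m_def .
  have "exp (-4 * t) = exp (-4 * s) * exp (-4 * (t - s))"
    unfolding exp_add[symmetric] by (simp add: algebra_simps)
  with h have "exp (-4 * s) * (exp (-4 * (t - s)) * E t) \<le> exp (-4 * s) * E s"
    by (simp add: mult.assoc)
  then show ?thesis by (simp add: mult_le_cancel_left_pos)
qed

lemma L_mono: assumes "s \<le> t" shows "L s \<le> L t"
proof (rule DERIV_nonneg_imp_nondecreasing[of s t L, OF assms])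
  fix x show "\<exists>y. (L has_real_derivative y) (at x) \<and> 0 \<le> y"
    by (intro exI[of _ "E x / 2"] conjI dL) (simp add: E_nonneg)
qed

lemma jump:
  assumes "E t \<ge> \<epsilon>" "\<epsilon> > 0"
  shows "L t - L (t - 1) \<ge> exp (-4) * \<epsilon> / 2"
proof -
  obtain z where z: "t - 1 < z" "z < t" "L t - L (t - 1) = (t - (t - 1)) * (E z / 2)"
    using MVT2[of "t - 1" t L "\<lambda>x. E x / 2"] dL by auto
  have "E z \<ge> exp (-4 * (t - z)) * E t" using decay[of z t] z by simp
  moreover have "exp (-4 * (t - z)) \<ge> exp (-4)" using z by simp
  moreover have "exp (-4 * (t - z)) * E t \<ge> exp (-4) * \<epsilon>"
    using assms calculation(2) by (intro mult_mono) auto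
  ultimately have "E z \<ge> exp (-4) * \<epsilon>" by linarith
  then show ?thesis using z by simp
qed

lemma E_tendsto: "(E \<longlongrightarrow> 0) at_bot"
proof (rule tendstoI)
  fix \<epsilon> :: real assume ep: "\<epsilon> > 0"
  show "\<forall>\<^sub>F t in at_bot. dist (E t) 0 < \<epsilon>"
  proof (rule ccontr)
    assume "\<not> (\<forall>\<^sub>F t in at_bot. dist (E t) 0 < \<epsilon>)"
    then have big: "\<forall>N. \<exists>t\<le>N. E t \<ge> \<epsilon>"
      unfolding eventually_at_bot_linorder using E_nonneg by (auto simp: not_less)
    define \<delta> where "\<delta> = exp (-4) * \<epsilon> / 2"
    have dp: "\<delta> > 0" unfolding \<delta>_def using ep by simp
    have "\<exists>t\<le>0. L t \<le> L 0 - real n * \<delta>" for n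
    proof (induction n)
      case 0 then show ?case by auto
    next
      case (Suc n)
      then obtain t where t: "t \<le> 0" "L t \<le> L 0 - real n * \<delta>" by blast
      obtain t' where t': "t' \<le> t" "E t' \<ge> \<epsilon>" using big by blast
      have "L t' - L (t' - 1) \<ge> \<delta>" unfolding \<delta>_def by (rule jump[OF t'(2) ep])
      moreover have "L t' \<le> L t" by (rule L_mono[OF t'(1)])
      ultimately have "L (t' - 1) \<le> L 0 - real (Suc n) * \<delta>" using t by (simp add: algebra_simps)
      moreover have "t' - 1 \<le> 0" using t t' by simp
      ultimately show ?case by blast
    qed
    note ex = this
    obtain n where n: "L 0 < real n * \<delta>" using reals_Archimedean3[OF dp] by blast
    obtain t where "L t \<le> L 0 - real n * \<delta>" using ex[of n] by blast
    then have "L t < 0" using n by linarith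
    then show False using L_nonneg[of t] by simp
  qed
qed

lemma energy_tendsto: "(energy C \<longlongrightarrow> 0) at_bot"
proof -
  have "energy C = E" unfolding E_def by (rule ext) (rule energy_eq)
  then show ?thesis using E_tendsto by simp
qed

end


theorem proposition6p6:
  fixes C :: "real \<Rightarrow> real \<Rightarrow> real \<times> real" and lam p0 :: real
  assumes smooth: "smooth_map (\<lambda>(p, t). C p t)"
    and closed: "\<And>p t. C (p + 1) t = C p t"
    and embedded: "\<And>t. inj_on (\<lambda>p. C p t) {0..<1}"
    and nondeg1: "\<And>p t. det2 (C p t) (dP C p t) \<noteq> 0"
    and nondeg2: "\<And>p t. det2 (dP C p t) (dP (dP C) p t) \<noteq> 0"
    and convex: "\<And>p q t. det2 (dP C p t) (C q t - C p t) * det2 (dP C p t) (dP (dP C) p t) \<ge> 0"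
    and flow: "\<And>p t. p \<in> {p0..<p0 + 1} \<Longrightarrow>
        dT C p t = (lam + integral {p0..p} (\<lambda>q. ca_curv C q t * ca_metric C q t)) *\<^sub>R C p t
                   + (ca_curv C p t / 2) *\<^sub>R Cxi C p t"
    and bounded: "\<exists>M. \<forall>p t. \<bar>ca_curv C p t\<bar> \<le> M"
  shows "(energy C \<longlongrightarrow> 0) at_bot"
proof -
  interpret flowctx C lam p0
    using smooth closed nondeg1 nondeg2 flow by unfold_locales
  show ?thesis by (rule energy_tendsto)
qed

end
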